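(* Let $\mathcal{X}=\{0,1\}^{\mathbb{N}}$ with the product topology. For $\eta=(\eta_1,\eta_2,\ldots)\in\mathcal{X}$ let $a_n(\eta)=\#\{1\le i\le n:\eta_i=1\}$, let $\mathcal{Y}\subset\mathcal{X}$ be the set of $\eta$ for which $q(\eta)=\lim_{n\to\infty}a_n(\eta)/n$ exists, and let $\mathcal{Z}_{1/2}=\{\eta\in\mathcal{Y}: q(\eta)=1/2\}$. Fix $\rho>1$. For a subset $\mathcal{Z}\subset\mathcal{Y}$ and continuous functions $x,y:\mathcal{Z}\to[0,\infty)$ define the function $x\oplus y$ on $\mathcal{Z}$ pointwise by $$(x\oplus y)(\eta)=\sup_{p\in[0,1]\cap\mathbb{Q}}\rho^{-\mathrm{KL}(p;q(\eta))}x(\eta)^py(\eta)^{1-p}.$$ Then $x\oplus y=y\oplus x$ for all continuous $x,y:\mathcal{Z}\to[0,\infty)$ if and only if $\mathcal{Z}\subset\mathcal{Z}_{1/2}$.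
   Context: $\mathrm{KL}(p;q)=p\log\frac{p}{q}+(1-p)\log\frac{1-p}{1-q}$ for $p,q\in[0,1]$, with the conventions $0\log(0/a)=0$ for all $a\ge0$, $a\log(a/0)=+\infty$ for $a>0$, $\rho^{-\infty}=0$, and $0^0=1$. *)

theory Defs
  imports "HOL-Analysis.Analysis"
begin

text \<open>The space X = {0,1}^N with the product topology. A point eta is a
  function nat => bool; eta_{i+1} (paper, 1-indexed) is eta i here (0-indexed).\<close>
definition cantorX :: "(nat \<Rightarrow> bool) topology" where
  "cantorX = product_topology (\<lambda>_. discrete_topology (UNIV :: bool set)) UNIV"

definition a_cnt :: "nat \<Rightarrow> (nat \<Rightarrow> bool) \<Rightarrow> nat" where
  "a_cnt n \<eta> = card {i. i < n \<and> \<eta> i}"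

definition Yset :: "(nat \<Rightarrow> bool) set" where
  "Yset = {\<eta>. convergent (\<lambda>n. real (a_cnt n \<eta>) / real n)}"

definition qlim :: "(nat \<Rightarrow> bool) \<Rightarrow> real" where
  "qlim \<eta> = lim (\<lambda>n. real (a_cnt n \<eta>) / real n)"

definition Zhalf :: "(nat \<Rightarrow> bool) set" where
  "Zhalf = {\<eta> \<in> Yset. qlim \<eta> = 1/2}"

definition xlogxy :: "real \<Rightarrow> real \<Rightarrow> ereal" where
  "xlogxy a b = (if a = 0 then 0 else if b = 0 then \<infinity> else ereal (a * ln (a / b)))"

definition KL :: "real \<Rightarrow> real \<Rightarrow> ereal" where
  "KL p q = xlogxy p q + xlogxy (1 - p) (1 - q)"

definition rho_neg_pow :: "real \<Rightarrow> ereal \<Rightarrow> real" where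
  "rho_neg_pow \<rho> k = (if k = \<infinity> then 0 else \<rho> powr (- real_of_ereal k))"

definition rpow :: "real \<Rightarrow> real \<Rightarrow> real" where
  "rpow a b = (if b = 0 then 1 else a powr b)"

definition oplus :: "real \<Rightarrow> ((nat \<Rightarrow> bool) \<Rightarrow> real) \<Rightarrow> ((nat \<Rightarrow> bool) \<Rightarrow> real)
    \<Rightarrow> (nat \<Rightarrow> bool) \<Rightarrow> real" where
  "oplus \<rho> x y \<eta> = (SUP p \<in> {p. p \<in> \<rat> \<and> 0 \<le> p \<and> p \<le> 1}.
      rho_neg_pow \<rho> (KL p (qlim \<eta>)) * rpow (x \<eta>) p * rpow (y \<eta>) (1 - p))"

end

theory Submission
  imports Defs
begin

lemma qlim_range:
  assumes "\<eta> \<in> Yset" shows "0 \<le> qlim \<eta> \<and> qlim \<eta> \<le> 1"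
proof -
  let ?f = "\<lambda>n. real (a_cnt n \<eta>) / real n"
  have c: "?f \<longlonglongrightarrow> qlim \<eta>" using assms unfolding Yset_def qlim_def
    by (simp add: convergent_LIMSEQ_iff)
  have le: "a_cnt n \<eta> \<le> n" for n
  proof -
    have "{i. i < n \<and> \<eta> i} \<subseteq> {..<n}" by auto
    then show ?thesis unfolding a_cnt_def using card_mono[of "{..<n}"] by fastforce
  qed
  have "?f n \<le> 1" for n
    using le[of n] by (cases "n = 0") (auto simp: divide_le_eq_1)
  moreover have "?f n \<ge> 0" for n by simp
  ultimately show ?thesis
    using LIMSEQ_le_const[OF c] LIMSEQ_le_const2[OF c] by auto
qed

lemma rnp_nonneg: "rho_neg_pow \<rho> k \<ge> 0"
  unfolding rho_neg_pow_def by auto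

lemma oplus_10:
  "oplus \<rho> (\<lambda>_. 1) (\<lambda>_. 0) \<eta> = rho_neg_pow \<rho> (KL 1 (qlim \<eta>))"
proof -
  let ?S = "{p. p \<in> \<rat> \<and> 0 \<le> p \<and> p \<le> (1::real)}"
  let ?g = "\<lambda>p. rho_neg_pow \<rho> (KL p (qlim \<eta>)) * rpow 1 p * rpow 0 (1 - p)"
  have "Sup (?g ` ?S) = ?g 1"
  proof (rule cSup_eq_maximum)
    show "?g 1 \<in> ?g ` ?S" by (rule imageI) simp
  next
    fix z assume "z \<in> ?g ` ?S"
    then obtain p where p: "p \<in> ?S" "z = ?g p" by auto
    show "z \<le> ?g 1"
    proof (cases "p = 1")
      case True then show ?thesis using p by simp
    next
      case False then show ?thesis using p by (simp add: rpow_def rnp_nonneg)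
    qed
  qed
  then show ?thesis unfolding oplus_def by (simp add: rpow_def)
qed

lemma oplus_01:
  "oplus \<rho> (\<lambda>_. 0) (\<lambda>_. 1) \<eta> = rho_neg_pow \<rho> (KL 0 (qlim \<eta>))"
proof -
  let ?S = "{p. p \<in> \<rat> \<and> 0 \<le> p \<and> p \<le> (1::real)}"
  let ?g = "\<lambda>p. rho_neg_pow \<rho> (KL p (qlim \<eta>)) * rpow 0 p * rpow 1 (1 - p)"
  have "Sup (?g ` ?S) = ?g 0"
  proof (rule cSup_eq_maximum)
    show "?g 0 \<in> ?g ` ?S" by (rule imageI) simp
  next
    fix z assume "z \<in> ?g ` ?S"
    then obtain p where p: "p \<in> ?S" "z = ?g p" by auto
    show "z \<le> ?g 0"
    proof (cases "p = 0")
      case True then show ?thesis using p by simp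
    next
      case False then show ?thesis using p by (simp add: rpow_def rnp_nonneg)
    qed
  qed
  then show ?thesis unfolding oplus_def by (simp add: rpow_def)
qed

lemma KL_diff:
  assumes "\<rho> > 1" "0 \<le> q" "q \<le> 1" "q \<noteq> 1/2"
  shows "rho_neg_pow \<rho> (KL 1 q) \<noteq> rho_neg_pow \<rho> (KL 0 q)"
proof -
  consider "q = 0" | "q = 1" | "0 < q \<and> q < 1" using assms by linarith
  then show ?thesis
  proof cases
    case 1 then show ?thesis using assms
      by (simp add: KL_def xlogxy_def rho_neg_pow_def)
  next
    case 2 then show ?thesis using assms
      by (simp add: KL_def xlogxy_def rho_neg_pow_def)
  next
    case 3
    have k1: "KL 1 q = ereal (ln (1/q))" using 3 by (simp add: KL_def xlogxy_def)
    have k0: "KL 0 q = ereal (ln (1/(1-q)))" using 3 by (simp add: KL_def xlogxy_def)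
    have ne: "ln (1/q) \<noteq> ln (1/(1-q))"
    proof
      assume "ln (1/q) = ln (1/(1-q))"
      then have "1/q = 1/(1-q)" using 3 by (simp add: ln_inj_iff)
      then have "q = 1 - q" using 3 by (simp add: field_simps)
      then show False using assms by simp
    qed
    show ?thesis
    proof
      assume "rho_neg_pow \<rho> (KL 1 q) = rho_neg_pow \<rho> (KL 0 q)"
      then have "\<rho> powr (- ln (1/q)) = \<rho> powr (- ln (1/(1-q)))"
        by (simp add: k1 k0 rho_neg_pow_def)
      then have "- ln (1/q) = - ln (1/(1-q))" using assms(1) powr_inj by fastforce
      then show False using ne by simp
    qed
  qed
qed

lemma KL_sym: "KL (1 - p) (1/2) = KL p (1/2)"
  unfolding KL_def by (simp add: add.commute)

lemma oplus_sym_half: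
  assumes "qlim \<eta> = 1/2"
  shows "oplus \<rho> x y \<eta> = oplus \<rho> y x \<eta>"
proof -
  let ?S = "{p. p \<in> \<rat> \<and> 0 \<le> p \<and> p \<le> (1::real)}"
  have im: "(\<lambda>p. 1 - p) ` ?S = ?S"
  proof
    show "(\<lambda>p. 1 - p) ` ?S \<subseteq> ?S" by auto
    show "?S \<subseteq> (\<lambda>p. 1 - p) ` ?S"
    proof
      fix p assume "p \<in> ?S"
      then have "1 - p \<in> ?S" "p = 1 - (1 - p)" by auto
      then show "p \<in> (\<lambda>p. 1 - p) ` ?S" by blast
    qed
  qed
  have "oplus \<rho> y x \<eta> = (SUP p \<in> (\<lambda>p. 1 - p) ` ?S.
      rho_neg_pow \<rho> (KL p (qlim \<eta>)) * rpow (y \<eta>) p * rpow (x \<eta>) (1 - p))"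
    unfolding oplus_def im ..
  also have "\<dots> = (SUP p \<in> ?S.
      rho_neg_pow \<rho> (KL (1-p) (qlim \<eta>)) * rpow (y \<eta>) (1-p) * rpow (x \<eta>) (1 - (1-p)))"
    by (simp add: image_image)
  also have "\<dots> = oplus \<rho> x y \<eta>"
    unfolding oplus_def assms KL_sym by (simp add: mult_ac)
  finally show ?thesis by simp
qed

theorem proposition8p5:
  fixes \<rho> :: real and Z :: "(nat \<Rightarrow> bool) set"
  assumes "\<rho> > 1" and "Z \<subseteq> Yset"
  shows "(\<forall>x y. continuous_map (subtopology cantorX Z) euclideanreal x
              \<and> continuous_map (subtopology cantorX Z) euclideanreal y
              \<and> (\<forall>\<eta>\<in>Z. x \<eta> \<ge> 0 \<and> y \<eta> \<ge> 0)
              \<longrightarrow> (\<forall>\<eta>\<in>Z. oplus \<rho> x y \<eta> = oplus \<rho> y x \<eta>))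
         \<longleftrightarrow> Z \<subseteq> Zhalf"
proof
  assume H: "\<forall>x y. continuous_map (subtopology cantorX Z) euclideanreal x
              \<and> continuous_map (subtopology cantorX Z) euclideanreal y
              \<and> (\<forall>\<eta>\<in>Z. x \<eta> \<ge> 0 \<and> y \<eta> \<ge> 0)
              \<longrightarrow> (\<forall>\<eta>\<in>Z. oplus \<rho> x y \<eta> = oplus \<rho> y x \<eta>)"
  show "Z \<subseteq> Zhalf"
  proof
    fix \<eta> assume e: "\<eta> \<in> Z"
    have Y: "\<eta> \<in> Yset" using e assms(2) by auto
    have "oplus \<rho> (\<lambda>_. 1) (\<lambda>_. 0) \<eta> = oplus \<rho> (\<lambda>_. 0) (\<lambda>_. 1) \<eta>"
      using H e by (auto simp: continuous_map_const)
    then have "rho_neg_pow \<rho> (KL 1 (qlim \<eta>)) = rho_neg_pow \<rho> (KL 0 (qlim \<eta>))"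
      by (simp add: oplus_10 oplus_01)
    then have "qlim \<eta> = 1/2" using KL_diff[OF assms(1)] qlim_range[OF Y] by blast
    then show "\<eta> \<in> Zhalf" using Y by (simp add: Zhalf_def)
  qed
next
  assume "Z \<subseteq> Zhalf"
  then show "\<forall>x y. continuous_map (subtopology cantorX Z) euclideanreal x
              \<and> continuous_map (subtopology cantorX Z) euclideanreal y
              \<and> (\<forall>\<eta>\<in>Z. x \<eta> \<ge> 0 \<and> y \<eta> \<ge> 0)
              \<longrightarrow> (\<forall>\<eta>\<in>Z. oplus \<rho> x y \<eta> = oplus \<rho> y x \<eta>)"
    using oplus_sym_half by (auto simp: Zhalf_def subset_iff)
qed

end
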